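(* Assume the setup described in the context (graph $G$ with $n-1\ge 3$ vertices and $s\ge3$ edges, $M=K_1\vee G$ with $\ell=s+n-1$ edges $e_1,\dots,e_\ell$, the normalized $m$-fold cover $\mathcal{H}=(L,H)$ of $M$, and the quantities $t$, $P_3,\dots,P_6$, $x_\mathcal{H}$, $S_i$). Then: (i) $\displaystyle\sum_{1\le i_1<i_2<i_3\le \ell}\left|\bigcap_{j=1}^3 S_{i_j}\right| \le t\,m^{n-2} - x_\mathcal{H}\,m^{n-3} + |P_3|\,m^{n-3}$; (ii) $\displaystyle\sum_{1\le i_1<\cdots<i_4\le \ell}\left|\bigcap_{j=1}^4 S_{i_j}\right| \ge |P_4|\,m^{n-3} - 2|P_4|\,x_\mathcal{H}\,m^{n-4}$; (iii) $\displaystyle\sum_{1\le i_1<\cdots<i_5\le \ell}\left|\bigcap_{j=1}^5 S_{i_j}\right| \le |P_5|\,m^{n-3} + \left(\binom{\ell}{5}-|P_5|\right)m^{n-4}$; (iv) $\displaystyle\sum_{1\le i_1<\cdots<i_6\le \ell}\left|\bigcap_{j=1}^6 S_{i_j}\right| \ge |P_6|\,m^{n-3} - 2|P_6|\,x_\mathcal{H}\,m^{n-4}$; (v) for every integer $k\ge 7$, $\displaystyle\sum_{1\le i_1<\cdots<i_k\le \ell}\left|\bigcap_{j=1}^k S_{i_j}\right| \le \binom{\ell}{k} m^{n-4}$.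
   Context: All graphs are finite and simple; $[m]=\{1,\dots,m\}$. For $S,U \subseteq V(H)$, $E_H(S,U)$ is the set of edges of $H$ with one endpoint in $S$ and the other in $U$. A cover of a graph $G$ is a pair $\mathcal{H}=(L,H)$ where $H$ is a graph and $L: V(G)\to \mathcal{P}(V(H))$ satisfies: (1) $\{L(u): u\in V(G)\}$ is a partition of $V(H)$; (2) for each $u \in V(G)$, $H[L(u)]$ is complete; (3) if $E_H(L(u),L(v))\neq\emptyset$ then $u=v$ or $uv\in E(G)$; (4) if $uv \in E(G)$ then $E_H(L(u),L(v))$ is a matching (possibly empty). The cover is $m$-fold if $|L(u)|=m$ for all $u$. Setup: $G$ is a graph with $n-1$ vertices, where $n\ge 4$, and $s\ge 3$ edges $e_1,\dots,e_s$, with $e_i=u_iv_i$. $M=K_1\vee G$ is obtained by adding a new vertex $w$ adjacent to all vertices of $G$; so $M$ has $n$ vertices, and its $n-1$ edges incident to $w$ are labeled $e_{s+1},\dots,e_{s+n-1}$, so $E(M)=\{e_1,\dots,e_\ell\}$ with $\ell=s+n-1$. $t$ denotes the number of 3-cycles in $M$. For $i\in\{3,4,5,6\}$, $P_i$ is the set of edge sets $A\subseteq E(M)$ with $|A|=i$ such that the spanning subgraph $(V(M),A)$ has exactly $n-3$ connected components. $m\in\mathbb{N}$ and $\mathcal{H}=(L,H)$ is an $m$-fold cover of $M$ such that $|E_H(L(u),L(v))|=m$ for every $uv\in E(M)$, the vertices of $H$ are named so that $L(u)=\{(u,j):j\in[m]\}$ for each $u\in V(M)$, and $(w,j)(v,j)\in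 E(H)$ for every $v\in V(G)$ and $j\in[m]$. For $i\in[s]$, $x_{i}$ is the number of edges of $E_H(L(u_i),L(v_i))$ joining $(u_i,j)$ and $(v_i,j')$ with $j\ne j'$, and $x_\mathcal{H}=\sum_{i=1}^s x_i$. Let $\mathcal{U}=\{I\subseteq V(H): |I\cap L(v)|=1 \text{ for all } v\in V(M)\}$ and, for $i\in[\ell]$ with $e_i=ab$, let $S_i$ be the set of $I\in\mathcal{U}$ such that the induced subgraph $H[I]$ contains an edge of $E_H(L(a),L(b))$. *)

theory Defs
  imports Main
begin

definition sgraph :: "'a set \<Rightarrow> 'a set set \<Rightarrow> bool" where
  "sgraph Vs Es \<longleftrightarrow> finite Vs \<and>
     (\<forall>e\<in>Es. \<exists>a b. e = {a, b} \<and> a \<noteq> b \<and> a \<in> Vs \<and> b \<in> Vs)"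

definition joinV :: "'v set \<Rightarrow> 'v \<Rightarrow> 'v set" where
  "joinV V w = insert w V"

definition joinE :: "'v set \<Rightarrow> 'v set set \<Rightarrow> 'v \<Rightarrow> 'v set set" where
  "joinE V E w = E \<union> {{w, v} | v. v \<in> V}"

definition fib :: "nat \<Rightarrow> 'v \<Rightarrow> ('v \<times> nat) set" where
  "fib m u = {u} \<times> {1..m}"

definition edges_between :: "'a set set \<Rightarrow> 'a set \<Rightarrow> 'a set \<Rightarrow> 'a set set" where
  "edges_between EH S U = {f \<in> EH. \<exists>x\<in>S. \<exists>y\<in>U. f = {x, y}}"

definition is_matching :: "'a set set \<Rightarrow> bool" where
  "is_matching F \<longleftrightarrow> (\<forall>f\<in>F. \<forall>g\<in>F. f \<noteq> g \<longrightarrow> f \<inter> g = {})"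

text \<open>An m-fold cover (L,H) of the graph (VM,EM) whose vertices are named so that
  L(u) = {(u,j) : j in [m]}; H is the graph (VM x [m], EH).\<close>
definition is_named_cover ::
  "'v set \<Rightarrow> 'v set set \<Rightarrow> nat \<Rightarrow> ('v \<times> nat) set set \<Rightarrow> bool" where
  "is_named_cover VM EM m EH \<longleftrightarrow>
     sgraph (VM \<times> {1..m}) EH \<and>
     (\<forall>u\<in>VM. \<forall>x\<in>fib m u. \<forall>y\<in>fib m u. x \<noteq> y \<longrightarrow> {x, y} \<in> EH) \<and>
     (\<forall>u\<in>VM. \<forall>v\<in>VM. edges_between EH (fib m u) (fib m v) \<noteq> {} \<longrightarrow>
          u = v \<or> {u, v} \<in> EM) \<and>
     (\<forall>u v. {u, v} \<in> EM \<longrightarrow> is_matching (edges_between EH (fib m u) (fib m v)))"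

definition x_edge :: "nat \<Rightarrow> ('v \<times> nat) set set \<Rightarrow> 'v set \<Rightarrow> nat" where
  "x_edge m EH e = card {f. \<exists>a b j j'. e = {a, b} \<and> f \<in> edges_between EH (fib m a) (fib m b)
                              \<and> j \<noteq> j' \<and> f = {(a, j), (b, j')}}"

definition xH :: "nat \<Rightarrow> ('v \<times> nat) set set \<Rightarrow> 'v set set \<Rightarrow> nat" where
  "xH m EH E = (\<Sum>e\<in>E. x_edge m EH e)"

definition transversals :: "'v set \<Rightarrow> nat \<Rightarrow> ('v \<times> nat) set set" where
  "transversals VM m = {I. I \<subseteq> VM \<times> {1..m} \<and> (\<forall>v\<in>VM. card (I \<inter> fib m v) = 1)}"

definition Sset :: "'v set \<Rightarrow> nat \<Rightarrow> ('v \<times> nat) set set \<Rightarrow> 'v set \<Rightarrow> ('v \<times> nat) set set" where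
  "Sset VM m EH e = {I \<in> transversals VM m. \<exists>a b. e = {a, b} \<and>
        (\<exists>f\<in>edges_between EH (fib m a) (fib m b). f \<subseteq> I)}"

definition num_triangles :: "'v set \<Rightarrow> 'v set set \<Rightarrow> nat" where
  "num_triangles Vs Es = card {T. T \<subseteq> Vs \<and> card T = 3 \<and>
        (\<forall>x\<in>T. \<forall>y\<in>T. x \<noteq> y \<longrightarrow> {x, y} \<in> Es)}"

definition adjrel :: "'v set set \<Rightarrow> ('v \<times> 'v) set" where
  "adjrel A = {(x, y). {x, y} \<in> A}"

definition components :: "'v set \<Rightarrow> 'v set set \<Rightarrow> 'v set set" where
  "components Vs A = (\<lambda>x. {y \<in> Vs. (x, y) \<in> (adjrel A)\<^sup>*}) ` Vs"

definition Pset :: "'v set \<Rightarrow> 'v set set \<Rightarrow> nat \<Rightarrow> nat \<Rightarrow> 'v set set set" where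
  "Pset Vs Es c i = {A. A \<subseteq> Es \<and> card A = i \<and> card (components Vs A) = c}"

text \<open>sum over 1<=i_1<...<i_k<=l of |S_{i_1} cap ... cap S_{i_k}|, i.e. over k-subsets of edges.\<close>
definition inter_sum :: "'v set \<Rightarrow> 'v set set \<Rightarrow> nat \<Rightarrow> ('v \<times> nat) set set \<Rightarrow> nat \<Rightarrow> nat" where
  "inter_sum VM EM m EH k = (\<Sum>A\<in>{A. A \<subseteq> EM \<and> card A = k}. card (\<Inter>e\<in>A. Sset VM m EH e))"

end

theory Submission
  imports Defs "HOL-Library.FuncSet"
begin

lemma eb_sym: "edges_between EH S U = edges_between EH U S"
  unfolding edges_between_def by (auto simp: insert_commute)

locale cov =
  fixes VM :: "'v set" and EM :: "'v set set" and m :: nat and EH :: "('v \<times> nat) set set"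
  assumes finVM: "finite VM"
  and EMe: "\<And>e. e \<in> EM \<Longrightarrow> \<exists>a b. e = {a,b} \<and> a \<noteq> b \<and> a \<in> VM \<and> b \<in> VM"
  and EHe: "\<And>f. f \<in> EH \<Longrightarrow> \<exists>p q. f = {p,q} \<and> p \<noteq> q \<and> p \<in> VM \<times> {1..m} \<and> q \<in> VM \<times> {1..m}"
  and match: "\<And>u v. {u,v} \<in> EM \<Longrightarrow> is_matching (edges_between EH (fib m u) (fib m v))"
  and full: "\<And>u v. {u,v} \<in> EM \<Longrightarrow> card (edges_between EH (fib m u) (fib m v)) = m"
begin

definition good where "good A f \<longleftrightarrow> (\<forall>e\<in>A. \<exists>a b. e = {a,b} \<and> {(a, f a), (b, f b)} \<in> EH)"
definition Nset where "Nset A = {f \<in> PiE VM (\<lambda>_. {1..m}). good A f}"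
definition tr :: "('v \<Rightarrow> nat) \<Rightarrow> ('v \<times> nat) set" where "tr f = (\<lambda>v. (v, f v)) ` VM"

lemma EH_in: "{p,q} \<in> EH \<Longrightarrow> p \<in> VM \<times> {1..m} \<and> q \<in> VM \<times> {1..m}"
  using EHe by (metis doubleton_eq_iff)

lemma tr_inj: "inj_on tr (PiE VM (\<lambda>_. {1..m}))"
proof (rule inj_onI)
  fix f g assume f: "f \<in> PiE VM (\<lambda>_. {1..m})" and g: "g \<in> PiE VM (\<lambda>_. {1..m})" and e: "tr f = tr g"
  show "f = g"
  proof (rule PiE_ext[OF f g])
    fix x assume "x \<in> VM"
    then have "(x, f x) \<in> tr g" using e unfolding tr_def by auto
    then show "f x = g x" unfolding tr_def by auto
  qed
qed

lemma tr_in: "f \<in> PiE VM (\<lambda>_. {1..m}) \<Longrightarrow> tr f \<in> transversals VM m"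
proof -
  assume f: "f \<in> PiE VM (\<lambda>_. {1..m})"
  have "\<And>v. v \<in> VM \<Longrightarrow> tr f \<inter> fib m v = {(v, f v)}"
    using f unfolding tr_def fib_def by auto
  then show ?thesis using f unfolding transversals_def tr_def by auto
qed

lemma tr_surj: "I \<in> transversals VM m \<Longrightarrow> \<exists>f\<in>PiE VM (\<lambda>_. {1..m}). tr f = I"
proof -
  assume I: "I \<in> transversals VM m"
  have "\<forall>v\<in>VM. \<exists>j. I \<inter> fib m v = {(v,j)}"
  proof
    fix v assume v: "v \<in> VM"
    then have "card (I \<inter> fib m v) = 1" using I unfolding transversals_def by auto
    then obtain p where p: "I \<inter> fib m v = {p}" by (metis card_1_singletonE)
    then have "p \<in> fib m v" by auto
    then show "\<exists>j. I \<inter> fib m v = {(v,j)}" using p unfolding fib_def by auto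
  qed
  then obtain g where g: "\<forall>v\<in>VM. I \<inter> fib m v = {(v, g v)}" by metis
  define f where "f = restrict g VM"
  have fP: "f \<in> PiE VM (\<lambda>_. {1..m})"
    unfolding f_def using g by (force simp: fib_def)
  have "tr f = I"
  proof
    show "tr f \<subseteq> I" using g unfolding tr_def f_def by auto
    show "I \<subseteq> tr f"
    proof
      fix p assume p: "p \<in> I"
      then obtain v j where pv: "p = (v,j)" "v \<in> VM" "j \<in> {1..m}" using I unfolding transversals_def by auto
      then have "p \<in> I \<inter> fib m v" using p unfolding fib_def by auto
      then have "p = (v, g v)" using g pv by auto
      then show "p \<in> tr f" using pv unfolding tr_def f_def by auto
    qed
  qed
  then show ?thesis using fP by blast
qed

lemma tr_S: "f \<in> PiE VM (\<lambda>_. {1..m}) \<Longrightarrow>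
   tr f \<in> Sset VM m EH e \<longleftrightarrow> (\<exists>a b. e = {a,b} \<and> {(a, f a), (b, f b)} \<in> EH)"
proof
  assume f: "f \<in> PiE VM (\<lambda>_. {1..m})" and S: "tr f \<in> Sset VM m EH e"
  then obtain a b g where ab: "e = {a,b}" "g \<in> edges_between EH (fib m a) (fib m b)" "g \<subseteq> tr f"
    unfolding Sset_def by auto
  then obtain x y where xy: "g \<in> EH" "x \<in> fib m a" "y \<in> fib m b" "g = {x,y}"
    unfolding edges_between_def by auto
  have "x = (a, f a)" "y = (b, f b)" using xy ab(3) unfolding tr_def fib_def by auto
  then show "\<exists>a b. e = {a,b} \<and> {(a, f a), (b, f b)} \<in> EH" using ab xy by auto
next
  assume f: "f \<in> PiE VM (\<lambda>_. {1..m})" and "\<exists>a b. e = {a,b} \<and> {(a, f a), (b, f b)} \<in> EH"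
  then obtain a b where ab: "e = {a,b}" "{(a, f a), (b, f b)} \<in> EH" by auto
  then have "(a, f a) \<in> VM \<times> {1..m}" "(b, f b) \<in> VM \<times> {1..m}" using EH_in by auto
  then have "(a, f a) \<in> fib m a" "(b, f b) \<in> fib m b" unfolding fib_def by auto
  then have "{(a, f a), (b, f b)} \<in> edges_between EH (fib m a) (fib m b)"
    using ab unfolding edges_between_def by blast
  moreover have "{(a, f a), (b, f b)} \<subseteq> tr f"
    using \<open>(a, f a) \<in> VM \<times> {1..m}\<close> \<open>(b, f b) \<in> VM \<times> {1..m}\<close> unfolding tr_def by auto
  ultimately show "tr f \<in> Sset VM m EH e" unfolding Sset_def using tr_in[OF f] ab by blast
qed

lemma inter_eq: "A \<noteq> {} \<Longrightarrow> (\<Inter>e\<in>A. Sset VM m EH e) = tr ` Nset A"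
proof
  assume A: "A \<noteq> {}"
  show "(\<Inter>e\<in>A. Sset VM m EH e) \<subseteq> tr ` Nset A"
  proof
    fix I assume I: "I \<in> (\<Inter>e\<in>A. Sset VM m EH e)"
    then obtain e where "e \<in> A" using A by auto
    then have "I \<in> transversals VM m" using I unfolding Sset_def by auto
    then obtain f where f: "f\<in>PiE VM (\<lambda>_. {1..m})" "tr f = I" using tr_surj by blast
    then have "good A f" using I tr_S[OF f(1)] unfolding good_def by auto
    then show "I \<in> tr ` Nset A" using f unfolding Nset_def by auto
  qed
  show "tr ` Nset A \<subseteq> (\<Inter>e\<in>A. Sset VM m EH e)"
    using tr_S unfolding Nset_def good_def by auto
qed

lemma card_inter: "A \<noteq> {} \<Longrightarrow> card (\<Inter>e\<in>A. Sset VM m EH e) = card (Nset A)"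
  using inter_eq card_image tr_inj inj_on_subset unfolding Nset_def
  by (metis (no_types, lifting) mem_Collect_eq subsetI)

end


lemma choose2_super: "((a::nat)+1 choose 2) + (b+1 choose 2) \<le> (a+b+1 choose 2)"
proof (induction b)
  case 0 then show ?case by simp
next
  case (Suc b)
  have e1: "(Suc b + 1 choose 2) = (b+1 choose 2) + (b+1)"
    by (simp add: numeral_2_eq_2)
  have e2: "(a + Suc b + 1 choose 2) = (a+b+1 choose 2) + (a+b+1)"
    by (simp add: numeral_2_eq_2)
  show ?case using Suc e1 e2 by simp
qed

lemma convex_choose:
  assumes "finite S" "\<And>K. K \<in> S \<Longrightarrow> (s K::nat) \<ge> 1"
  shows "(\<Sum>K\<in>S. s K choose 2) \<le> (1 + (\<Sum>K\<in>S. s K - 1)) choose 2"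
  using assms
proof (induction S rule: finite_induct)
  case empty then show ?case by simp
next
  case (insert K S)
  then have IH: "(\<Sum>K\<in>S. s K choose 2) \<le> (1 + (\<Sum>K\<in>S. s K - 1)) choose 2" by auto
  have "s K \<ge> 1" using insert.prems by auto
  then have sK: "s K = (s K - 1) + 1" by simp
  have "(\<Sum>K\<in>insert K S. s K choose 2) = (s K choose 2) + (\<Sum>K\<in>S. s K choose 2)"
    using insert by simp
  also have "\<dots> \<le> ((s K - 1) + 1 choose 2) + ((\<Sum>K\<in>S. s K - 1) + 1 choose 2)"
    using IH sK by simp
  also have "\<dots> \<le> ((s K - 1) + (\<Sum>K\<in>S. s K - 1) + 1 choose 2)" by (rule choose2_super)
  also have "\<dots> = (1 + (\<Sum>K\<in>insert K S. s K - 1)) choose 2" using insert by simp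
  finally show ?case .
qed

context cov begin

definition comp where "comp A x = {y \<in> VM. (x,y) \<in> (adjrel A)\<^sup>*}"

lemma components_eq: "components VM A = comp A ` VM"
  unfolding components_def comp_def by simp

lemma sym_adj: "sym (adjrel A)"
  unfolding adjrel_def sym_def by (auto simp: insert_commute)

lemma sym_adj_rt: "(x,y) \<in> (adjrel A)\<^sup>* \<Longrightarrow> (y,x) \<in> (adjrel A)\<^sup>*"
  by (meson symD sym_adj sym_rtrancl)

lemma adj_VM: "A \<subseteq> EM \<Longrightarrow> (x,y) \<in> adjrel A \<Longrightarrow> x \<in> VM \<and> y \<in> VM \<and> x \<noteq> y \<and> {x,y} \<in> A"
  unfolding adjrel_def using EMe by (force simp: doubleton_eq_iff)

lemma comp_self: "x \<in> VM \<Longrightarrow> x \<in> comp A x"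
  unfolding comp_def by auto

lemma comp_eq_iff: "x \<in> VM \<Longrightarrow> y \<in> VM \<Longrightarrow> comp A x = comp A y \<longleftrightarrow> (x,y) \<in> (adjrel A)\<^sup>*"
proof
  assume x: "x \<in> VM" and y: "y \<in> VM" and e: "comp A x = comp A y"
  then have "y \<in> comp A x" using comp_self by auto
  then show "(x,y) \<in> (adjrel A)\<^sup>*" unfolding comp_def by auto
next
  assume x: "x \<in> VM" and y: "y \<in> VM" and r: "(x,y) \<in> (adjrel A)\<^sup>*"
  have r': "(y,x) \<in> (adjrel A)\<^sup>*" using sym_adj_rt[OF r] .
  show "comp A x = comp A y"
    unfolding comp_def using r r' by (auto intro: rtrancl_trans)
qed

lemma comp_mem: "x \<in> VM \<Longrightarrow> y \<in> comp A x \<Longrightarrow> comp A y = comp A x"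
  using comp_eq_iff unfolding comp_def by (metis (mono_tags, lifting) mem_Collect_eq)

lemma comps_fin: "finite (components VM A)"
  unfolding components_eq using finVM by simp

lemma comps_sub: "C \<in> components VM A \<Longrightarrow> C \<subseteq> VM"
  unfolding components_eq comp_def by auto

lemma comps_ne: "C \<in> components VM A \<Longrightarrow> card C \<ge> 1"
proof -
  assume "C \<in> components VM A"
  then obtain x where "x \<in> VM" "C = comp A x" unfolding components_eq by auto
  then have "x \<in> C" "finite C" using comp_self comps_sub finVM finite_subset
    by (auto simp: comp_def)
  then show ?thesis using card_0_eq by fastforce
qed

lemma comps_disj: "C1 \<in> components VM A \<Longrightarrow> C2 \<in> components VM A \<Longrightarrow> C1 \<noteq> C2 \<Longrightarrow> C1 \<inter> C2 = {}"
proof -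
  assume c: "C1 \<in> components VM A" "C2 \<in> components VM A" "C1 \<noteq> C2"
  then obtain x y where xy: "x \<in> VM" "y \<in> VM" "C1 = comp A x" "C2 = comp A y" unfolding components_eq by auto
  show ?thesis
  proof (rule ccontr)
    assume "C1 \<inter> C2 \<noteq> {}"
    then obtain z where z: "z \<in> C1" "z \<in> C2" by auto
    have "comp A z = C1" using comp_mem[OF xy(1)] z(1) xy(3) by simp
    moreover have "comp A z = C2" using comp_mem[OF xy(2)] z(2) xy(4) by simp
    ultimately show False using c by auto
  qed
qed

lemma comps_union: "\<Union>(components VM A) = VM"
  using comps_sub comp_self unfolding components_eq by fastforce

lemma sum_card_comps: "(\<Sum>C\<in>components VM A. card C) = card VM"
proof -
  have "card (\<Union>(components VM A)) = (\<Sum>C\<in>components VM A. card C)"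
    by (rule card_Union_disjoint) (auto simp: pairwise_def disjnt_def comps_fin comps_disj
        intro: finite_subset[OF comps_sub finVM])
  then show ?thesis using comps_union by simp
qed

lemma sum_card_comps1: "(\<Sum>C\<in>components VM A. card C - 1) = card VM - card (components VM A)"
proof -
  have "(\<Sum>C\<in>components VM A. card C - 1) = (\<Sum>C\<in>components VM A. card C) - (\<Sum>C\<in>components VM A. 1)"
    by (rule sum_subtractf_nat) (use comps_ne in auto)
  then show ?thesis using sum_card_comps by simp
qed

lemma comp_card_le: "card (components VM A) \<le> card VM"
  unfolding components_eq using finVM card_image_le by blast

lemma edge_in_comp: "A \<subseteq> EM \<Longrightarrow> e \<in> A \<Longrightarrow> \<exists>C\<in>components VM A. e \<subseteq> C \<and> card e = 2"
proof -
  assume A: "A \<subseteq> EM" "e \<in> A"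
  then obtain a b where ab: "e = {a,b}" "a \<noteq> b" "a \<in> VM" "b \<in> VM" using EMe by blast
  then have "(a,b) \<in> adjrel A" using A unfolding adjrel_def by auto
  then have "b \<in> comp A a" using ab unfolding comp_def by auto
  then show ?thesis using ab comp_self unfolding components_eq by auto
qed

definition P2 :: "'v set \<Rightarrow> 'v set set" where "P2 K = {e. e \<subseteq> K \<and> card e = 2}"

lemma card_P2: "C \<in> components VM A \<Longrightarrow> card (P2 C) = card C choose 2"
  unfolding P2_def by (rule n_subsets) (meson comps_sub finVM finite_subset)

lemma fin_P2: "C \<in> components VM A \<Longrightarrow> finite (P2 C)"
  unfolding P2_def using comps_sub finVM finite_subset by (metis (no_types, lifting) Collect_mono Pow_def finite_Pow_iff)

lemma A_sub_P2: "A \<subseteq> EM \<Longrightarrow> A \<subseteq> (\<Union>C\<in>components VM A. P2 C)"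
  using edge_in_comp unfolding P2_def by blast

lemma finA: "A \<subseteq> EM \<Longrightarrow> finite A"
  using A_sub_P2 fin_P2 comps_fin by (meson finite_UN_I finite_subset)

lemma card_A_le: "A \<subseteq> EM \<Longrightarrow> card A \<le> (\<Sum>C\<in>components VM A. card C choose 2)"
proof -
  assume A: "A \<subseteq> EM"
  have "card A \<le> card (\<Union>C\<in>components VM A. P2 C)"
    by (rule card_mono) (use A_sub_P2[OF A] fin_P2 comps_fin in auto)
  also have "\<dots> \<le> (\<Sum>C\<in>components VM A. card (P2 C))" by (rule card_UN_le[OF comps_fin])
  also have "\<dots> = (\<Sum>C\<in>components VM A. card C choose 2)" using card_P2 by simp
  finally show ?thesis .
qed

lemma rank_bound: "A \<subseteq> EM \<Longrightarrow> card A \<le> (1 + (card VM - card (components VM A))) choose 2"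
proof -
  assume A: "A \<subseteq> EM"
  have "card A \<le> (\<Sum>C\<in>components VM A. card C choose 2)" using card_A_le[OF A] .
  also have "\<dots> \<le> (1 + (\<Sum>C\<in>components VM A. card C - 1)) choose 2"
    by (rule convex_choose[OF comps_fin comps_ne])
  also have "\<dots> = (1 + (card VM - card (components VM A))) choose 2"
    using sum_card_comps1 by simp
  finally show ?thesis .
qed

end


lemma path_lemma:
  assumes S: "\<And>p q. (p,q) \<in> R \<Longrightarrow> (q,p) \<in> R"
    and xy: "(x,y) \<in> (R \<union> {(a,b),(b,a)})\<^sup>*"
  shows "(x,y) \<in> R\<^sup>* \<or> (((x,a) \<in> R\<^sup>* \<or> (x,b) \<in> R\<^sup>*) \<and> ((y,a) \<in> R\<^sup>* \<or> (y,b) \<in> R\<^sup>*))"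
  using xy
proof (induction rule: rtrancl_induct)
  case base then show ?case by simp
next
  case (step y z)
  show ?case
  proof (cases "(y,z) \<in> R")
    case True
    then have zy: "(z,y) \<in> R" using S by blast
    from step.IH show ?thesis
    proof
      assume "(x,y) \<in> R\<^sup>*" then show ?thesis using True by (meson rtrancl.rtrancl_into_rtrancl)
    next
      assume h: "((x,a) \<in> R\<^sup>* \<or> (x,b) \<in> R\<^sup>*) \<and> ((y,a) \<in> R\<^sup>* \<or> (y,b) \<in> R\<^sup>*)"
      then show ?thesis using zy by (meson converse_rtrancl_into_rtrancl)
    qed
  next
    case False
    then have z: "z = a \<or> z = b" "y = a \<or> y = b" using step.hyps(2) by auto
    then show ?thesis using step.IH by auto
  qed
qed

context cov begin

lemma adj_insert: "e = {a,b} \<Longrightarrow> adjrel (insert e A) = adjrel A \<union> {(a,b),(b,a)}"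
  unfolding adjrel_def by (auto simp: doubleton_eq_iff)

definition rep where "rep A C = (SOME x. x \<in> VM \<and> C = comp A x)"

lemma rep: "C \<in> components VM A \<Longrightarrow> rep A C \<in> VM \<and> C = comp A (rep A C)"
proof -
  assume "C \<in> components VM A"
  then obtain x where "x \<in> VM \<and> C = comp A x" unfolding components_eq by auto
  then show ?thesis unfolding rep_def by (rule someI)
qed

lemma comps_insert:
  assumes A: "A \<subseteq> EM" and e: "e \<in> EM"
  shows "card (components VM A) \<le> card (components VM (insert e A)) + 1"
proof -
  obtain a b where ab: "e = {a,b}" "a \<noteq> b" "a \<in> VM" "b \<in> VM" using EMe[OF e] by blast
  define R where "R = adjrel A"
  have S: "\<And>p q. (p,q) \<in> R \<Longrightarrow> (q,p) \<in> R" using sym_adj[of A] unfolding R_def by (meson symD)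
  have RA': "adjrel (insert e A) = R \<union> {(a,b),(b,a)}" using adj_insert[OF ab(1)] R_def by simp
  define D where "D = components VM A - {comp A b}"
  define g where "g C = comp (insert e A) (rep A C)" for C
  have inj: "inj_on g D"
  proof (rule inj_onI)
    fix C1 C2 assume C1: "C1 \<in> D" and C2: "C2 \<in> D" and eq: "g C1 = g C2"
    define x1 where "x1 = rep A C1"
    define x2 where "x2 = rep A C2"
    have r1: "x1 \<in> VM" "C1 = comp A x1" using rep C1 unfolding D_def x1_def by auto
    have r2: "x2 \<in> VM" "C2 = comp A x2" using rep C2 unfolding D_def x2_def by auto
    have "(x1,x2) \<in> (adjrel (insert e A))\<^sup>*"
      using eq comp_eq_iff[OF r1(1) r2(1)] unfolding g_def x1_def x2_def by simp
    then have p: "(x1,x2) \<in> R\<^sup>* \<or> (((x1,a) \<in> R\<^sup>* \<or> (x1,b) \<in> R\<^sup>*) \<and> ((x2,a) \<in> R\<^sup>* \<or> (x2,b) \<in> R\<^sup>*))"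
      using path_lemma[OF S] RA' by simp
    have nb1: "(x1,b) \<notin> R\<^sup>*"
    proof
      assume "(x1,b) \<in> R\<^sup>*"
      then have "comp A x1 = comp A b" using comp_eq_iff[OF r1(1) ab(4)] R_def by simp
      then show False using C1 r1 unfolding D_def by auto
    qed
    have nb2: "(x2,b) \<notin> R\<^sup>*"
    proof
      assume "(x2,b) \<in> R\<^sup>*"
      then have "comp A x2 = comp A b" using comp_eq_iff[OF r2(1) ab(4)] R_def by simp
      then show False using C2 r2 unfolding D_def by auto
    qed
    have "(x1,x2) \<in> R\<^sup>*"
    proof (cases "(x1,x2) \<in> R\<^sup>*")
      case False
      then have "(x1,a) \<in> R\<^sup>*" "(x2,a) \<in> R\<^sup>*" using p nb1 nb2 by auto
      moreover have "(a,x2) \<in> R\<^sup>*" using sym_adj_rt \<open>(x2,a) \<in> R\<^sup>*\<close> R_def by simp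
      ultimately show ?thesis by (meson rtrancl_trans)
    qed
    then show "C1 = C2" using comp_eq_iff[OF r1(1) r2(1)] r1 r2 R_def by simp
  qed
  have img: "g ` D \<subseteq> components VM (insert e A)"
    using rep unfolding g_def D_def components_eq by auto
  have "card (components VM A) \<le> card D + 1"
    unfolding D_def using comps_fin[of A]
    by (cases "comp A b \<in> components VM A") (auto simp: card_Diff_singleton_if)
  also have "card D = card (g ` D)" using card_image[OF inj] by simp
  also have "\<dots> \<le> card (components VM (insert e A))" by (rule card_mono[OF comps_fin img])
  finally show ?thesis by simp
qed

lemma comps_empty: "card (components VM {}) = card VM"
proof -
  have "\<And>x. x \<in> VM \<Longrightarrow> comp {} x = {x}" unfolding comp_def adjrel_def by auto
  then have "components VM {} = (\<lambda>x. {x}) ` VM" unfolding components_eq by auto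
  then show ?thesis by (simp add: card_image)
qed

lemma rank_lower: "A \<subseteq> EM \<Longrightarrow> card VM \<le> card (components VM A) + card A"
proof -
  assume A: "A \<subseteq> EM"
  have "finite A" using finA[OF A] .
  then show ?thesis using A
  proof (induction A rule: finite_induct)
    case empty then show ?case using comps_empty by simp
  next
    case (insert e A)
    then have "card VM \<le> card (components VM A) + card A" by auto
    moreover have "card (components VM A) \<le> card (components VM (insert e A)) + 1"
      using comps_insert insert.prems by auto
    ultimately show ?case using insert.hyps by simp
  qed
qed

lemma tri:
  assumes A: "A \<subseteq> EM" and c3: "card A = 3" and r2: "card VM - card (components VM A) = 2"
  shows "\<exists>K\<in>components VM A. card K = 3 \<and> A = P2 K"
proof -
  let ?c = "components VM A"
  have sum1: "(\<Sum>C\<in>?c. card C - 1) = 2" using sum_card_comps1 r2 by simp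
  have le: "3 \<le> (\<Sum>C\<in>?c. card C choose 2)" using card_A_le[OF A] c3 by simp
  obtain K where K: "K \<in> ?c" "card K \<ge> 3"
  proof (rule ccontr)
    assume "\<not> thesis"
    then have "\<forall>C\<in>?c. card C \<le> 2" using that by force
    then have "\<forall>C\<in>?c. (card C choose 2) = card C - 1"
    proof (intro ballI)
      fix C assume all: "\<forall>C\<in>?c. card C \<le> 2" and C: "C \<in> ?c"
      then have "card C = 1 \<or> card C = 2" using comps_ne[OF C] by force
      then show "(card C choose 2) = card C - 1" by auto
    qed
    then have "(\<Sum>C\<in>?c. card C choose 2) = 2" using sum1 by simp
    then show False using le by simp
  qed
  have split: "(\<Sum>C\<in>?c. card C - 1) = (card K - 1) + (\<Sum>C\<in>?c - {K}. card C - 1)"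
    by (rule sum.remove[OF comps_fin K(1)])
  then have cK: "card K = 3" using sum1 K(2) by simp
  then have "(\<Sum>C\<in>?c - {K}. card C - 1) = 0" using split sum1 by simp
  then have small: "\<forall>C\<in>?c - {K}. card C - 1 = 0" using comps_fin by simp
  have "A \<subseteq> P2 K"
  proof
    fix e assume e: "e \<in> A"
    then obtain C where C: "C \<in> ?c" "e \<subseteq> C" "card e = 2" using edge_in_comp[OF A] by blast
    have "finite C" using comps_sub[OF C(1)] finVM finite_subset by blast
    then have "card e \<le> card C" using C card_mono by blast
    then have "C = K" using small C by force
    then show "e \<in> P2 K" using C unfolding P2_def by simp
  qed
  moreover have "card (P2 K) = 3" using card_P2[OF K(1)] cK by (simp add: choose_two)
  ultimately have "A = P2 K" using fin_P2[OF K(1)] c3 by (simp add: card_subset_eq)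
  then show ?thesis using K cK by blast
qed

end


lemma card_PiE_if:
  assumes S: "finite S" and c: "c0 \<in> S"
  shows "card (PiE S (\<lambda>x. if x = c0 then B else C)) = card B * card C ^ (card S - 1)"
proof -
  define f where "f x = card (if x = c0 then B else C)" for x
  have "card (PiE S (\<lambda>x. if x = c0 then B else C)) = (\<Prod>x\<in>S. f x)"
    unfolding f_def by (rule card_PiE[OF S])
  also have "\<dots> = f c0 * (\<Prod>x\<in>S - {c0}. f x)"
    by (rule prod.remove[OF S c])
  also have "(\<Prod>x\<in>S - {c0}. f x) = (\<Prod>x\<in>S - {c0}. card C)"
    by (rule prod.cong) (auto simp: f_def)
  also have "\<dots> = card C ^ (card S - 1)" using S c by simp
  finally show ?thesis unfolding f_def by simp
qed

context cov begin

lemma EM_ne: "{y,z} \<in> EM \<Longrightarrow> y \<noteq> z \<and> y \<in> VM \<and> z \<in> VM"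
  using EMe by (metis doubleton_eq_iff)

lemma match_eq:
  assumes yz: "{y,z} \<in> EM" and p: "p \<in> fib m y" and q: "q \<in> fib m z" and q': "q' \<in> fib m z"
    and e1: "{p,q} \<in> EH" and e2: "{p,q'} \<in> EH"
  shows "q = q'"
proof -
  have ne: "y \<noteq> z" using EM_ne[OF yz] by simp
  have m1: "{p,q} \<in> edges_between EH (fib m y) (fib m z)" using e1 p q unfolding edges_between_def by blast
  have m2: "{p,q'} \<in> edges_between EH (fib m y) (fib m z)" using e2 p q' unfolding edges_between_def by blast
  have "{p,q} = {p,q'}"
  proof (rule ccontr)
    assume ne: "{p,q} \<noteq> {p,q'}"
    have M: "\<forall>f\<in>edges_between EH (fib m y) (fib m z). \<forall>g\<in>edges_between EH (fib m y) (fib m z). f \<noteq> g \<longrightarrow> f \<inter> g = {}"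
      using match[OF yz] unfolding is_matching_def .
    have "{p,q} \<inter> {p,q'} = {}" using M[rule_format, OF m1 m2 ne] .
    then show False by auto
  qed
  moreover have "p \<noteq> q" using p q ne unfolding fib_def by auto
  ultimately show ?thesis by (metis doubleton_eq_iff)
qed

lemma good_edge: "good A f \<Longrightarrow> {y,z} \<in> A \<Longrightarrow> {(y, f y), (z, f z)} \<in> EH"
proof -
  assume g: "good A f" and yz: "{y,z} \<in> A"
  then obtain a b where ab: "{y,z} = {a,b}" "{(a, f a), (b, f b)} \<in> EH" unfolding good_def by blast
  from ab(1) have "(y = a \<and> z = b) \<or> (y = b \<and> z = a)" by (simp add: doubleton_eq_iff)
  then show ?thesis using ab(2) by (auto simp: insert_commute)
qed

lemma prop_eq:
  assumes A: "A \<subseteq> EM" and f: "f \<in> Nset A" and g: "g \<in> Nset A"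
    and r: "(y,z) \<in> (adjrel A)\<^sup>*" and eq: "f y = g y"
  shows "f z = g z"
  using r
proof (induction rule: rtrancl_induct)
  case base then show ?case using eq .
next
  case (step z u)
  have zu: "z \<in> VM" "u \<in> VM" "{z,u} \<in> A" using adj_VM[OF A step.hyps(2)] by auto
  have fP: "f \<in> PiE VM (\<lambda>_. {1..m})" "good A f" and gP: "g \<in> PiE VM (\<lambda>_. {1..m})" "good A g"
    using f g unfolding Nset_def by auto
  have "(z, f z) \<in> fib m z" "(u, f u) \<in> fib m u" "(u, g u) \<in> fib m u"
    using zu fP gP unfolding fib_def by auto
  moreover have "{(z, f z), (u, f u)} \<in> EH" using good_edge[OF fP(2) zu(3)] .
  moreover have "{(z, f z), (u, g u)} \<in> EH" using good_edge[OF gP(2) zu(3)] step.IH by simp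
  ultimately have "(u, f u) = (u, g u)" using match_eq zu(3) A by blast
  then show ?case by simp
qed

lemma finNset: "finite (Nset A)"
  unfolding Nset_def using finite_PiE[OF finVM, of "\<lambda>_. {1..m}"] by simp

lemma upper: assumes A: "A \<subseteq> EM" shows "card (Nset A) \<le> m ^ card (components VM A)"
proof -
  define phi where "phi f = (\<lambda>C\<in>components VM A. f (rep A C))" for f :: "'v \<Rightarrow> nat"
  have inj: "inj_on phi (Nset A)"
  proof (rule inj_onI)
    fix f g assume f: "f \<in> Nset A" and g: "g \<in> Nset A" and e: "phi f = phi g"
    have fP: "f \<in> PiE VM (\<lambda>_. {1..m})" and gP: "g \<in> PiE VM (\<lambda>_. {1..m})" using f g unfolding Nset_def by auto
    show "f = g"
    proof (rule PiE_ext[OF fP gP])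
      fix x assume x: "x \<in> VM"
      define C where "C = comp A x"
      have C: "C \<in> components VM A" unfolding C_def components_eq using x by simp
      have r: "rep A C \<in> VM" "C = comp A (rep A C)" using rep[OF C] by auto
      have "f (rep A C) = g (rep A C)" using e C unfolding phi_def by (metis restrict_apply')
      moreover have "(rep A C, x) \<in> (adjrel A)\<^sup>*" using comp_eq_iff[OF r(1) x, of A] r(2) C_def by simp
      ultimately show "f x = g x" using prop_eq[OF A f g] by blast
    qed
  qed
  have img: "phi ` Nset A \<subseteq> PiE (components VM A) (\<lambda>_. {1..m})"
  proof
    fix h assume "h \<in> phi ` Nset A"
    then obtain f where f: "f \<in> Nset A" "h = phi f" by auto
    have fP: "f \<in> PiE VM (\<lambda>_. {1..m})" using f unfolding Nset_def by auto
    show "h \<in> PiE (components VM A) (\<lambda>_. {1..m})"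
      unfolding f(2) phi_def using rep fP by auto
  qed
  have "card (Nset A) = card (phi ` Nset A)" using card_image[OF inj] by simp
  also have "\<dots> \<le> card (PiE (components VM A) (\<lambda>_. {1..m}))"
    by (rule card_mono[OF finite_PiE[OF comps_fin] img]) simp
  also have "\<dots> = m ^ card (components VM A)" using card_PiE[OF comps_fin, of A "\<lambda>_. {1..m}"] by simp
  finally show ?thesis .
qed

lemma upper_le:
  assumes A: "A \<subseteq> EM" and VM: "VM \<noteq> {}" and cj: "card (components VM A) \<le> j"
  shows "card (Nset A) \<le> m ^ j"
proof (cases "m = 0")
  case True
  then have "PiE VM (\<lambda>_. {1..m}) = {}" using VM by (auto simp: PiE_eq_empty_iff)
  then show ?thesis unfolding Nset_def by simp
next
  case False
  then show ?thesis using upper[OF A] power_increasing[OF cj, of m] by simp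
qed

definition pe where "pe e = (SOME p. e = {fst p, snd p} \<and> fst p \<noteq> snd p \<and> fst p \<in> VM \<and> snd p \<in> VM)"

lemma pe: "e \<in> EM \<Longrightarrow> e = {fst (pe e), snd (pe e)} \<and> fst (pe e) \<noteq> snd (pe e) \<and> fst (pe e) \<in> VM \<and> snd (pe e) \<in> VM"
proof -
  assume "e \<in> EM"
  then obtain a b where "e = {a,b} \<and> a \<noteq> b \<and> a \<in> VM \<and> b \<in> VM" using EMe by blast
  then have "e = {fst (a,b), snd (a,b)} \<and> fst (a,b) \<noteq> snd (a,b) \<and> fst (a,b) \<in> VM \<and> snd (a,b) \<in> VM" by simp
  then show ?thesis unfolding pe_def by (rule someI)
qed

definition Dj where "Dj e = {j \<in> {1..m}. {(fst (pe e), j), (snd (pe e), j)} \<notin> EH}"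

lemma lower:
  assumes A: "A \<subseteq> EM"
  shows "m ^ card (components VM A) \<le> card (Nset A) + (\<Sum>e\<in>A. card (Dj e)) * m ^ (card (components VM A) - 1)"
proof -
  let ?c = "components VM A"
  define P where "P = PiE ?c (\<lambda>_. {1..m})"
  define cf where "cf h = (\<lambda>v\<in>VM. h (comp A v))" for h :: "'v set \<Rightarrow> nat"
  define Bad where "Bad e = {h \<in> P. h (comp A (fst (pe e))) \<in> Dj e}" for e
  have finP: "finite P" unfolding P_def by (rule finite_PiE[OF comps_fin]) simp
  have inj: "inj_on cf P"
  proof (rule inj_onI)
    fix h1 h2 assume h1: "h1 \<in> P" and h2: "h2 \<in> P" and e: "cf h1 = cf h2"
    show "h1 = h2"
    proof (rule PiE_ext[OF h1[unfolded P_def] h2[unfolded P_def]])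
      fix C assume "C \<in> ?c"
      then obtain x where x: "x \<in> VM" "C = comp A x" unfolding components_eq by auto
      have "cf h1 x = cf h2 x" using e by simp
      then show "h1 C = h2 C" using x unfolding cf_def by simp
    qed
  qed
  have sub: "P \<subseteq> (\<Union>e\<in>A. Bad e) \<union> {h \<in> P. cf h \<in> Nset A}"
  proof
    fix h assume h: "h \<in> P"
    show "h \<in> (\<Union>e\<in>A. Bad e) \<union> {h \<in> P. cf h \<in> Nset A}"
    proof (cases "\<exists>e\<in>A. h \<in> Bad e")
      case True then show ?thesis by blast
    next
      case False
      have "cf h \<in> PiE VM (\<lambda>_. {1..m})"
        using h unfolding P_def cf_def components_eq by auto
      moreover have "good A (cf h)"
        unfolding good_def
      proof
        fix e assume e: "e \<in> A"
        define a where "a = fst (pe e)"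
        define b where "b = snd (pe e)"
        have ab: "e = {a,b}" "a \<in> VM" "b \<in> VM" using pe[of e] e A unfolding a_def b_def by auto
        have "(a,b) \<in> adjrel A" using e ab unfolding adjrel_def by auto
        then have cab: "comp A a = comp A b" using comp_eq_iff[OF ab(2,3)] by auto
        have "h (comp A a) \<in> {1..m}" using h ab unfolding P_def components_eq by auto
        moreover have "h (comp A a) \<notin> Dj e" using False e h unfolding Bad_def a_def by auto
        ultimately have "{(a, h (comp A a)), (b, h (comp A a))} \<in> EH" unfolding Dj_def a_def b_def by auto
        then have "{(a, cf h a), (b, cf h b)} \<in> EH" using cab ab unfolding cf_def by simp
        then show "\<exists>a b. e = {a, b} \<and> {(a, cf h a), (b, cf h b)} \<in> EH" using ab by blast
      qed
      ultimately show ?thesis using h unfolding Nset_def by blast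
    qed
  qed
  have cardBad: "card (Bad e) = card (Dj e) * m ^ (card ?c - 1)" if e: "e \<in> A" for e
  proof -
    define C0 where "C0 = comp A (fst (pe e))"
    have C0: "C0 \<in> ?c" using pe[of e] e A unfolding C0_def components_eq by auto
    have Dsub: "Dj e \<subseteq> {1..m}" unfolding Dj_def by auto
    have "Bad e = PiE ?c (\<lambda>x. if x = C0 then Dj e else {1..m})"
    proof (rule set_eqI, rule iffI)
      fix h assume "h \<in> Bad e"
      then have h: "h \<in> P" "h C0 \<in> Dj e" unfolding Bad_def C0_def by auto
      then show "h \<in> PiE ?c (\<lambda>x. if x = C0 then Dj e else {1..m})"
        unfolding P_def PiE_iff by auto
    next
      fix h assume h: "h \<in> PiE ?c (\<lambda>x. if x = C0 then Dj e else {1..m})"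
      then have "h C0 \<in> Dj e" using C0 unfolding PiE_iff by (metis (full_types))
      moreover have "h \<in> P" using h Dsub unfolding P_def PiE_iff by (auto split: if_splits)
      ultimately show "h \<in> Bad e" unfolding Bad_def C0_def by auto
    qed
    then show ?thesis using card_PiE_if[OF comps_fin C0, of "Dj e" "{1..m}"] by simp
  qed
  have "m ^ card ?c = card P" unfolding P_def using card_PiE[OF comps_fin, of A "\<lambda>_. {1..m}"] by simp
  also have "\<dots> \<le> card ((\<Union>e\<in>A. Bad e) \<union> {h \<in> P. cf h \<in> Nset A})"
    by (rule card_mono[OF _ sub]) (use finP in \<open>auto simp: Bad_def finA[OF A]\<close>)
  also have "\<dots> \<le> card (\<Union>e\<in>A. Bad e) + card {h \<in> P. cf h \<in> Nset A}" by (rule card_Un_le)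
  also have "card (\<Union>e\<in>A. Bad e) \<le> (\<Sum>e\<in>A. card (Bad e))" by (rule card_UN_le[OF finA[OF A]])
  also have "(\<Sum>e\<in>A. card (Bad e)) = (\<Sum>e\<in>A. card (Dj e)) * m ^ (card ?c - 1)"
    using cardBad by (simp add: sum_distrib_right)
  also have "card {h \<in> P. cf h \<in> Nset A} = card (cf ` {h \<in> P. cf h \<in> Nset A})"
    using card_image[OF inj_on_subset[OF inj]] by (metis (no_types, lifting) mem_Collect_eq subsetI)
  also have "\<dots> \<le> card (Nset A)" by (rule card_mono[OF finNset]) auto
  finally show ?thesis by simp
qed

end


context cov begin

definition ST where "ST a b = {j \<in> {1..m}. {(a,j),(b,j)} \<in> EH}"

lemma straight_count:
  assumes e: "e \<in> EM" "e = {a,b}"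
  shows "card (ST a b) + x_edge m EH e = m"
proof -
  have ab: "a \<noteq> b" "a \<in> VM" "b \<in> VM" using EM_ne e by auto
  define F where "F = edges_between EH (fib m a) (fib m b)"
  define X where "X = {f. \<exists>a' b' j j'. e = {a', b'} \<and> f \<in> edges_between EH (fib m a') (fib m b')
                              \<and> j \<noteq> j' \<and> f = {(a', j), (b', j')}}"
  define SE where "SE = (\<lambda>j. {(a,j),(b,j)}) ` ST a b"
  have cF: "card F = m" unfolding F_def using full e by simp
  have finF: "finite F"
  proof -
    have "F \<subseteq> Pow (VM \<times> {1..m})" unfolding F_def edges_between_def using EH_in by auto
    then show ?thesis using finVM by (meson finite_Pow_iff finite_SigmaI finite_atLeastAtMost finite_subset)
  qed
  have XF: "X \<subseteq> F"
  proof
    fix f assume "f \<in> X"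
    then obtain a' b' where "{a,b} = {a',b'}" "f \<in> edges_between EH (fib m a') (fib m b')"
      unfolding X_def using e by blast
    then show "f \<in> F" unfolding F_def by (metis doubleton_eq_iff eb_sym)
  qed
  have SEF: "SE \<subseteq> F" unfolding SE_def ST_def F_def edges_between_def fib_def by blast
  have FU: "F \<subseteq> SE \<union> X"
  proof
    fix f assume f: "f \<in> F"
    then obtain x y where xy: "f \<in> EH" "x \<in> fib m a" "y \<in> fib m b" "f = {x,y}"
      unfolding F_def edges_between_def by auto
    then obtain j j' where jj: "x = (a,j)" "y = (b,j')" "j \<in> {1..m}" "j' \<in> {1..m}" unfolding fib_def by auto
    show "f \<in> SE \<union> X"
    proof (cases "j = j'")
      case True
      then have "j \<in> ST a b" using xy jj unfolding ST_def by auto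
      then show ?thesis using True xy jj unfolding SE_def by auto
    next
      case False
      then have "f \<in> X" unfolding X_def using e f xy jj F_def by blast
      then show ?thesis by simp
    qed
  qed
  have disj: "SE \<inter> X = {}"
  proof (rule ccontr)
    assume "SE \<inter> X \<noteq> {}"
    then obtain f where f: "f \<in> SE" "f \<in> X" by auto
    then obtain j where j: "f = {(a,j),(b,j)}" unfolding SE_def by auto
    obtain a' b' j1 j2 where "j1 \<noteq> j2" "f = {(a',j1),(b',j2)}" using f(2) unfolding X_def by auto
    then show False using j by (auto simp: doubleton_eq_iff)
  qed
  have inj: "inj_on (\<lambda>j. {(a,j),(b,j)}) (ST a b)"
    by (rule inj_onI) (use ab in \<open>auto simp: doubleton_eq_iff\<close>)
  have "F = SE \<union> X" using FU XF SEF by blast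
  then have "card F = card SE + card X"
    using card_Un_disjoint disj finF by (metis finite_Un)
  moreover have "card SE = card (ST a b)" unfolding SE_def using card_image[OF inj] .
  moreover have "card X = x_edge m EH e" unfolding X_def x_edge_def by simp
  ultimately show ?thesis using cF by simp
qed

lemma x_edge_le: "e \<in> EM \<Longrightarrow> x_edge m EH e \<le> m"
  using straight_count pe by (metis le_add2)

lemma card_Dj: assumes e: "e \<in> EM" shows "card (Dj e) = x_edge m EH e"
proof -
  define a where "a = fst (pe e)"
  define b where "b = snd (pe e)"
  have ab: "e = {a,b}" using pe[OF e] unfolding a_def b_def by simp
  have "Dj e = {1..m} - ST a b" unfolding Dj_def ST_def a_def b_def by auto
  moreover have sub: "ST a b \<subseteq> {1..m}" unfolding ST_def by auto
  moreover have fin: "finite (ST a b)" using finite_subset[OF sub] by simp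
  ultimately have "card (Dj e) = m - card (ST a b)"
    using card_Diff_subset[OF fin sub] by simp
  then show ?thesis using straight_count[OF e ab] by simp
qed

end

locale cov2 = cov VM EM m EH for VM EM m EH +
  fixes V E w
  assumes VMd: "VM = insert w V" and EMd: "EM = joinE V E w" and wV: "w \<notin> V"
    and Ein: "\<And>e. e \<in> E \<Longrightarrow> \<exists>a b. e = {a,b} \<and> a \<noteq> b \<and> a \<in> V \<and> b \<in> V"
    and normal: "\<And>v j. v \<in> V \<Longrightarrow> j \<in> {1..m} \<Longrightarrow> {(w, j), (v, j)} \<in> EH"
begin

lemma finE: "finite E"
proof -
  have "E \<subseteq> Pow VM" using Ein VMd by blast
  then show ?thesis using finVM finite_subset by blast
qed

lemma E_sub: "E \<subseteq> EM" unfolding EMd joinE_def by auto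

lemma Dj_w: assumes v: "v \<in> V" shows "card (Dj {w,v}) = 0"
proof -
  have e: "{w,v} \<in> EM" unfolding EMd joinE_def using v by auto
  have "Dj {w,v} = {}"
  proof -
    have "{fst (pe {w,v}), snd (pe {w,v})} = {w,v}" using pe[OF e] by simp
    then have eqs: "\<And>j. {(fst (pe {w,v}), j), (snd (pe {w,v}), j)} = {(w,j),(v,j)}"
      by (auto simp: doubleton_eq_iff)
    have H: "{(fst (pe {w,v}), j), (snd (pe {w,v}), j)} \<in> EH" if j: "j \<in> {1..m}" for j
      using eqs[of j] normal[OF v j] by simp
    then show ?thesis unfolding Dj_def by auto
  qed
  then show ?thesis by simp
qed

lemma sum_Dj: assumes A: "A \<subseteq> EM" shows "(\<Sum>e\<in>A. card (Dj e)) \<le> xH m EH E"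
proof -
  have finA': "finite A" using finA[OF A] .
  have "(\<Sum>e\<in>A. card (Dj e)) = (\<Sum>e\<in>A \<inter> E. card (Dj e)) + (\<Sum>e\<in>A - E. card (Dj e))"
    using finA' by (metis sum.Int_Diff)
  also have "(\<Sum>e\<in>A - E. card (Dj e)) = 0"
  proof (rule sum.neutral, rule ballI)
    fix e assume "e \<in> A - E"
    then obtain v where "v \<in> V" "e = {w,v}" using A unfolding EMd joinE_def by auto
    then show "card (Dj e) = 0" using Dj_w by simp
  qed
  also have "(\<Sum>e\<in>A \<inter> E. card (Dj e)) \<le> (\<Sum>e\<in>E. card (Dj e))"
    by (rule sum_mono2[OF finE]) auto
  also have "\<dots> = xH m EH E" unfolding xH_def using card_Dj E_sub by (auto intro: sum.cong)
  finally show ?thesis by simp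
qed

lemma tri_bound:
  assumes A: "A \<subseteq> EM" and uv: "u \<in> V" "v \<in> V" "u \<noteq> v"
    and inA: "{w,u} \<in> A" "{w,v} \<in> A" "{u,v} \<in> A"
  shows "card (Nset A) \<le> card (ST u v) * m ^ (card VM - 3)"
proof -
  have wVM: "w \<in> VM" unfolding VMd by simp
  have uVM: "u \<in> VM" "v \<in> VM" using uv unfolding VMd by auto
  have key: "f u = f w \<and> f v = f w \<and> f w \<in> ST u v" if f: "f \<in> Nset A" for f
  proof -
    have fP: "f \<in> PiE VM (\<lambda>_. {1..m})" "good A f" using f unfolding Nset_def by auto
    have fw: "f w \<in> {1..m}" using fP wVM by auto
    have fu: "f u \<in> {1..m}" "f v \<in> {1..m}" using fP uVM by auto
    have "(u, f u) = (u, f w)"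
      by (rule match_eq[of w u "(w, f w)"]) (use A inA fw fu good_edge[OF fP(2) inA(1)] normal[OF uv(1) fw] in \<open>auto simp: fib_def\<close>)
    moreover have "(v, f v) = (v, f w)"
      by (rule match_eq[of w v "(w, f w)"]) (use A inA fw fu good_edge[OF fP(2) inA(2)] normal[OF uv(2) fw] in \<open>auto simp: fib_def\<close>)
    moreover have "{(u, f u), (v, f v)} \<in> EH" using good_edge[OF fP(2) inA(3)] .
    ultimately show ?thesis using fw unfolding ST_def by auto
  qed
  define psi where "psi f = restrict f (VM - {u,v})" for f :: "'a \<Rightarrow> nat"
  have inj: "inj_on psi (Nset A)"
  proof (rule inj_onI)
    fix f g assume f: "f \<in> Nset A" and g: "g \<in> Nset A" and e: "psi f = psi g"
    have fP: "f \<in> PiE VM (\<lambda>_. {1..m})" and gP: "g \<in> PiE VM (\<lambda>_. {1..m})" using f g unfolding Nset_def by auto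
    have w': "w \<in> VM - {u,v}" using wVM uv wV by auto
    have eq: "\<And>x. x \<in> VM - {u,v} \<Longrightarrow> f x = g x" using e unfolding psi_def by (metis restrict_apply')
    show "f = g"
    proof (rule PiE_ext[OF fP gP])
      fix x assume x: "x \<in> VM"
      show "f x = g x"
      proof (cases "x \<in> {u,v}")
        case True
        then show ?thesis using key[OF f] key[OF g] eq[OF w'] by auto
      next
        case False then show ?thesis using eq x by auto
      qed
    qed
  qed
  have w': "w \<in> VM - {u,v}" using wVM uv wV by auto
  have img: "psi ` Nset A \<subseteq> PiE (VM - {u,v}) (\<lambda>x. if x = w then ST u v else {1..m})"
  proof
    fix h assume "h \<in> psi ` Nset A"
    then obtain f where f: "f \<in> Nset A" "h = psi f" by auto
    have fP: "f \<in> PiE VM (\<lambda>_. {1..m})" using f unfolding Nset_def by auto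
    have "\<forall>x\<in>VM. f x \<in> {1..m}" using fP by auto
    then show "h \<in> PiE (VM - {u,v}) (\<lambda>x. if x = w then ST u v else {1..m})"
      unfolding f(2) psi_def using key[OF f(1)] w' by (auto simp: PiE_iff)
  qed
  have fin: "finite (VM - {u,v})" using finVM by simp
  have cd: "card (VM - {u,v}) = card VM - 2" using uVM uv(3) finVM by (simp add: card_Diff_subset)
  have "card (Nset A) = card (psi ` Nset A)" using card_image[OF inj] by simp
  also have "\<dots> \<le> card (PiE (VM - {u,v}) (\<lambda>x. if x = w then ST u v else {1..m}))"
    by (rule card_mono[OF _ img]) (rule finite_PiE[OF fin], simp add: ST_def)
  also have "\<dots> = card (ST u v) * m ^ (card (VM - {u,v}) - 1)"
    using card_PiE_if[OF fin w', of "ST u v" "{1..m}"] by simp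
  also have "card (VM - {u,v}) - 1 = card VM - 3" using cd by simp
  finally show ?thesis .
qed

end


lemma choose_small: "(r::nat) \<le> 3 \<Longrightarrow> (1 + r choose 2) \<le> (if r \<le> 1 then 1 else if r = 2 then 3 else 6)"
proof -
  assume "r \<le> 3"
  then have "r = 0 \<or> r = 1 \<or> r = 2 \<or> r = 3" by arith
  then show ?thesis by (auto simp: choose_two)
qed

locale cov3 = cov2 VM EM m EH V E w for VM EM m EH V E w +
  fixes n :: nat
  assumes nVM: "card VM = n" and n4: "n \<ge> 4"
begin

definition Ak where "Ak k = {A. A \<subseteq> EM \<and> card A = k}"

lemma VMne: "VM \<noteq> {}" using nVM n4 by auto

lemma finEM: "finite EM"
proof -
  have "EM \<subseteq> Pow VM" using EMe by blast
  then show ?thesis using finVM finite_subset by blast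
qed

lemma finAk: "finite (Ak k)"
proof -
  have "Ak k \<subseteq> Pow EM" unfolding Ak_def by auto
  then show ?thesis using finEM finite_subset by blast
qed

lemma cardAk: "card (Ak k) = card EM choose k"
  unfolding Ak_def by (rule n_subsets[OF finEM])

lemma inter_N: "k \<ge> 1 \<Longrightarrow> inter_sum VM EM m EH k = (\<Sum>A\<in>Ak k. card (Nset A))"
  unfolding inter_sum_def Ak_def
proof (rule sum.cong)
  fix A assume "k \<ge> 1" "A \<in> {A. A \<subseteq> EM \<and> card A = k}"
  then have "A \<noteq> {}" by auto
  then show "card (\<Inter>e\<in>A. Sset VM m EH e) = card (Nset A)" by (rule card_inter)
qed simp

lemma r_bound:
  assumes A: "A \<subseteq> EM"
  shows "card A \<ge> 2 \<Longrightarrow> card (components VM A) + 2 \<le> n"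
    and "card A \<ge> 5 \<Longrightarrow> card (components VM A) + 3 \<le> n"
    and "card A \<ge> 7 \<Longrightarrow> card (components VM A) + 4 \<le> n"
proof -
  let ?r = "n - card (components VM A)"
  have le: "card A \<le> (1 + ?r) choose 2" using rank_bound[OF A] nVM by simp
  have cn: "card (components VM A) \<le> n" using comp_card_le nVM by simp
  show "card A \<ge> 2 \<Longrightarrow> card (components VM A) + 2 \<le> n"
  proof (rule ccontr)
    assume "card A \<ge> 2" "\<not> card (components VM A) + 2 \<le> n"
    then have "?r \<le> 1" by arith
    then have "(1 + ?r choose 2) \<le> 1" using choose_small[of ?r] by auto
    then show False using le \<open>card A \<ge> 2\<close> by simp
  qed
  show "card A \<ge> 5 \<Longrightarrow> card (components VM A) + 3 \<le> n"
  proof (rule ccontr)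
    assume "card A \<ge> 5" "\<not> card (components VM A) + 3 \<le> n"
    then have "?r \<le> 2" by arith
    then have "(1 + ?r choose 2) \<le> 3" using choose_small[of ?r] by (auto split: if_splits)
    then show False using le \<open>card A \<ge> 5\<close> by simp
  qed
  show "card A \<ge> 7 \<Longrightarrow> card (components VM A) + 4 \<le> n"
  proof (rule ccontr)
    assume "card A \<ge> 7" "\<not> card (components VM A) + 4 \<le> n"
    then have "?r \<le> 3" by arith
    then have "(1 + ?r choose 2) \<le> 6" using choose_small[of ?r] by (auto split: if_splits)
    then show False using le \<open>card A \<ge> 7\<close> by simp
  qed
qed

lemma part_v:
  assumes k: "k \<ge> 7"
  shows "inter_sum VM EM m EH k \<le> (card EM choose k) * m ^ (n - 4)"
proof -
  have "inter_sum VM EM m EH k = (\<Sum>A\<in>Ak k. card (Nset A))" using inter_N k by simp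
  also have "\<dots> \<le> (\<Sum>A\<in>Ak k. m ^ (n - 4))"
  proof (rule sum_mono)
    fix A assume "A \<in> Ak k"
    then have A: "A \<subseteq> EM" "card A = k" unfolding Ak_def by auto
    then have "card (components VM A) \<le> n - 4" using r_bound(3)[OF A(1)] k by simp
    then show "card (Nset A) \<le> m ^ (n - 4)" using upper_le[OF A(1) VMne] by simp
  qed
  also have "\<dots> = (card EM choose k) * m ^ (n - 4)" using cardAk by simp
  finally show ?thesis .
qed

lemma P_sub: "Pset VM EM c k \<subseteq> Ak k" unfolding Pset_def Ak_def by auto

lemma part_iii:
  "inter_sum VM EM m EH 5 \<le> card (Pset VM EM (n - 3) 5) * m ^ (n - 3)
      + ((card EM choose 5) - card (Pset VM EM (n - 3) 5)) * m ^ (n - 4)"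
proof -
  let ?P = "Pset VM EM (n - 3) 5"
  have "inter_sum VM EM m EH 5 = (\<Sum>A\<in>Ak 5. card (Nset A))" using inter_N by simp
  also have "\<dots> = (\<Sum>A\<in>Ak 5 - ?P. card (Nset A)) + (\<Sum>A\<in>?P. card (Nset A))"
    by (rule sum.subset_diff[OF P_sub finAk])
  also have "(\<Sum>A\<in>?P. card (Nset A)) \<le> (\<Sum>A\<in>?P. m ^ (n - 3))"
  proof (rule sum_mono)
    fix A assume "A \<in> ?P"
    then have A: "A \<subseteq> EM" "card (components VM A) = n - 3" unfolding Pset_def by auto
    then show "card (Nset A) \<le> m ^ (n - 3)" using upper[OF A(1)] by simp
  qed
  also have "(\<Sum>A\<in>Ak 5 - ?P. card (Nset A)) \<le> (\<Sum>A\<in>Ak 5 - ?P. m ^ (n - 4))"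
  proof (rule sum_mono)
    fix A assume "A \<in> Ak 5 - ?P"
    then have A: "A \<subseteq> EM" "card A = 5" "card (components VM A) \<noteq> n - 3" unfolding Pset_def Ak_def by auto
    then have "card (components VM A) \<le> n - 4" using r_bound(2)[OF A(1)] by simp
    then show "card (Nset A) \<le> m ^ (n - 4)" using upper_le[OF A(1) VMne] by simp
  qed
  also have "(\<Sum>A\<in>Ak 5 - ?P. m ^ (n - 4)) + (\<Sum>A\<in>?P. m ^ (n - 3))
      = card ?P * m ^ (n - 3) + ((card EM choose 5) - card ?P) * m ^ (n - 4)"
    using card_Diff_subset[OF finite_subset[OF P_sub finAk] P_sub] cardAk by simp
  finally show ?thesis by simp
qed

lemma part_even:
  assumes k: "k \<ge> 1"
  shows "int (inter_sum VM EM m EH k) \<ge>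
     int (card (Pset VM EM (n - 3) k)) * int m ^ (n - 3)
     - 2 * int (card (Pset VM EM (n - 3) k)) * int (xH m EH E) * int m ^ (n - 4)"
proof -
  let ?P = "Pset VM EM (n - 3) k"
  let ?x = "int (xH m EH E)"
  have each: "int (card (Nset A)) \<ge> int m ^ (n - 3) - ?x * int m ^ (n - 4)" if "A \<in> ?P" for A
  proof -
    have A: "A \<subseteq> EM" "card (components VM A) = n - 3" using that unfolding Pset_def by auto
    have "m ^ (n - 3) \<le> card (Nset A) + (\<Sum>e\<in>A. card (Dj e)) * m ^ (n - 3 - 1)"
      using lower[OF A(1)] A(2) by simp
    also have "n - 3 - 1 = n - 4" by simp
    finally have "m ^ (n - 3) \<le> card (Nset A) + (\<Sum>e\<in>A. card (Dj e)) * m ^ (n - 4)" .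
    moreover have "(\<Sum>e\<in>A. card (Dj e)) * m ^ (n - 4) \<le> xH m EH E * m ^ (n - 4)"
      using sum_Dj[OF A(1)] by simp
    ultimately have "m ^ (n - 3) \<le> card (Nset A) + xH m EH E * m ^ (n - 4)" by linarith
    then have "int (m ^ (n - 3)) \<le> int (card (Nset A)) + int (xH m EH E * m ^ (n - 4))" by linarith
    then show ?thesis by simp
  qed
  have "(\<Sum>A\<in>?P. int (card (Nset A))) \<le> (\<Sum>A\<in>Ak k. int (card (Nset A)))"
    by (rule sum_mono2[OF finAk P_sub]) simp
  moreover have "(\<Sum>A\<in>?P. int m ^ (n - 3) - ?x * int m ^ (n - 4)) \<le> (\<Sum>A\<in>?P. int (card (Nset A)))"
    by (rule sum_mono) (rule each)
  moreover have "(\<Sum>A\<in>?P. int m ^ (n - 3) - ?x * int m ^ (n - 4))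
       = int (card ?P) * int m ^ (n - 3) - int (card ?P) * ?x * int m ^ (n - 4)"
    by (simp add: algebra_simps)
  moreover have "int (card ?P) * ?x * int m ^ (n - 4) \<ge> 0" by simp
  moreover have "int (inter_sum VM EM m EH k) = (\<Sum>A\<in>Ak k. int (card (Nset A)))"
    using inter_N[OF k] by simp
  ultimately show ?thesis by linarith
qed

end


context cov3 begin

lemma Union_P2: "card K = 3 \<Longrightarrow> \<Union>(P2 K) = K"
proof
  show "\<Union>(P2 K) \<subseteq> K" unfolding P2_def by auto
  assume K: "card K = 3"
  show "K \<subseteq> \<Union>(P2 K)"
  proof
    fix x assume x: "x \<in> K"
    have "card (K - {x}) = 2" using K x by (simp add: card_Diff_singleton)
    then obtain y where "y \<in> K - {x}" by (metis card_2_iff insertI1)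
    then have "{x,y} \<in> P2 K" using x unfolding P2_def by auto
    then show "x \<in> \<Union>(P2 K)" by auto
  qed
qed


definition Tri where "Tri = {T. T \<subseteq> VM \<and> card T = 3 \<and> (\<forall>x\<in>T. \<forall>y\<in>T. x \<noteq> y \<longrightarrow> {x, y} \<in> EM)}"

lemma finTri: "finite Tri"
proof -
  have "Tri \<subseteq> Pow VM" unfolding Tri_def by auto
  then show ?thesis using finVM finite_subset by blast
qed

lemma VmV: "VM - {w} = V" using VMd wV by auto

lemma tri_w:
  assumes T: "T \<in> Tri" and w: "w \<in> T"
  shows "\<exists>u v. T = {w,u,v} \<and> u \<noteq> v \<and> u \<in> V \<and> v \<in> V \<and> {u,v} \<in> E \<and> T - {w} = {u,v}"
proof -
  have T3: "card T = 3" "T \<subseteq> VM" using T unfolding Tri_def by auto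
  have "card (T - {w}) = 2" using T3 w by (simp add: card_Diff_singleton)
  then obtain u v where uv: "T - {w} = {u,v}" "u \<noteq> v" by (meson card_2_iff)
  have uvV: "u \<in> V" "v \<in> V" using uv T3(2) VmV by auto
  have "{u,v} \<in> EM" using T uv unfolding Tri_def by auto
  moreover have "{u,v} \<noteq> {w,x}" for x using uvV wV by (auto simp: doubleton_eq_iff)
  ultimately have "{u,v} \<in> E" unfolding EMd joinE_def by auto
  moreover have "T = {w,u,v}" using uv w by auto
  ultimately show ?thesis using uv uvV by blast
qed

lemma triw_eq: "Tri \<inter> {T. w \<in> T} = insert w ` E"
proof
  show "Tri \<inter> {T. w \<in> T} \<subseteq> insert w ` E"
  proof
    fix T assume "T \<in> Tri \<inter> {T. w \<in> T}"
    then obtain u v where "T = {w,u,v}" "{u,v} \<in> E" using tri_w by blast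
    then show "T \<in> insert w ` E" by auto
  qed
  show "insert w ` E \<subseteq> Tri \<inter> {T. w \<in> T}"
  proof
    fix T assume "T \<in> insert w ` E"
    then obtain e where e: "e \<in> E" "T = insert w e" by auto
    then obtain u v where uv: "e = {u,v}" "u \<noteq> v" "u \<in> V" "v \<in> V" using Ein by blast
    have wu: "w \<noteq> u" "w \<noteq> v" using uv wV by auto
    have c: "card T = 3" using e uv wu by auto
    have s: "T \<subseteq> VM" using e uv VMd by auto
    have eE: "{u,v} \<in> EM" "{w,u} \<in> EM" "{w,v} \<in> EM" using e uv E_sub unfolding EMd joinE_def by auto
    have "\<forall>x\<in>T. \<forall>y\<in>T. x \<noteq> y \<longrightarrow> {x, y} \<in> EM"
      using eE e(2) uv(1) by (auto simp: insert_commute)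
    then show "T \<in> Tri \<inter> {T. w \<in> T}" using c s e unfolding Tri_def by auto
  qed
qed

definition bnd where "bnd T = int (m ^ (n - 2)) - (if w \<in> T then int (x_edge m EH (T - {w})) * int (m ^ (n - 3)) else 0)"

lemma bnd_nonneg: "T \<in> Tri \<Longrightarrow> bnd T \<ge> 0"
proof -
  assume T: "T \<in> Tri"
  show ?thesis
  proof (cases "w \<in> T")
    case True
    then obtain u v where uv: "T - {w} = {u,v}" "{u,v} \<in> E" using tri_w T by blast
    have "x_edge m EH (T - {w}) \<le> m" using x_edge_le E_sub uv by auto
    then have "x_edge m EH (T - {w}) * m ^ (n - 3) \<le> m * m ^ (n - 3)" by simp
    also have "m * m ^ (n - 3) = m ^ (n - 2)"
    proof -
      have "n - 2 = Suc (n - 3)" using n4 by arith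
      then show ?thesis by simp
    qed
    finally have "int (x_edge m EH (T - {w}) * m ^ (n - 3)) \<le> int (m ^ (n - 2))" by linarith
    then show ?thesis unfolding bnd_def using True by simp
  qed (simp add: bnd_def)
qed

lemma nonP3:
  assumes A: "A \<in> Ak 3 - Pset VM EM (n - 3) 3"
  shows "\<Union>A \<in> Tri \<and> A = P2 (\<Union>A) \<and> int (card (Nset A)) \<le> bnd (\<Union>A)"
proof -
  have A': "A \<subseteq> EM" "card A = 3" "card (components VM A) \<noteq> n - 3" using A unfolding Ak_def Pset_def by auto
  let ?c = "card (components VM A)"
  have "n \<le> ?c + 3" using rank_lower[OF A'(1)] A'(2) nVM by simp
  moreover have "?c + 2 \<le> n" using r_bound(1)[OF A'(1)] A'(2) by simp
  ultimately have c2: "?c = n - 2" using A'(3) by arith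
  then obtain K where K: "K \<in> components VM A" "card K = 3" "A = P2 K"
    using tri[OF A'(1,2)] nVM n4 by auto
  have UK: "\<Union>A = K" using K Union_P2 by simp
  have KT: "K \<in> Tri"
  proof -
    have "\<forall>x\<in>K. \<forall>y\<in>K. x \<noteq> y \<longrightarrow> {x, y} \<in> EM"
    proof (intro ballI impI)
      fix x y assume "x \<in> K" "y \<in> K" "x \<noteq> y"
      then have "{x,y} \<in> P2 K" unfolding P2_def by auto
      then show "{x,y} \<in> EM" using K(3) A'(1) by auto
    qed
    then show ?thesis using comps_sub[OF K(1)] K(2) unfolding Tri_def by auto
  qed
  have bound: "int (card (Nset A)) \<le> bnd K"
  proof (cases "w \<in> K")
    case False
    then show ?thesis unfolding bnd_def using upper[OF A'(1)] c2 by simp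
  next
    case True
    then obtain u v where uv: "K = {w,u,v}" "u \<noteq> v" "u \<in> V" "v \<in> V" "{u,v} \<in> E" "K - {w} = {u,v}"
      using tri_w KT by blast
    have wu: "w \<noteq> u" "w \<noteq> v" using uv wV by auto
    have "{w,u} \<in> P2 K" "{w,v} \<in> P2 K" "{u,v} \<in> P2 K"
      unfolding P2_def using uv(1,2) wu by auto
    then have inA: "{w,u} \<in> A" "{w,v} \<in> A" "{u,v} \<in> A" using K(3) by auto
    have "card (Nset A) \<le> card (ST u v) * m ^ (card VM - 3)"
      by (rule tri_bound[OF A'(1) uv(3,4,2) inA])
    moreover have "card (ST u v) + x_edge m EH {u,v} = m"
      using straight_count E_sub uv(5) by auto
    ultimately have "int (card (Nset A)) \<le> (int m - int (x_edge m EH {u,v})) * int (m ^ (n - 3))"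
      using nVM by (metis (no_types, lifting) add_diff_cancel_right' of_nat_diff of_nat_le_iff of_nat_mult le_add2)
    also have "\<dots> = int m * int (m ^ (n - 3)) - int (x_edge m EH {u,v}) * int (m ^ (n - 3))"
      by (simp add: algebra_simps)
    also have "int m * int (m ^ (n - 3)) = int (m ^ (n - 2))"
    proof -
      have "n - 2 = Suc (n - 3)" using n4 by arith
      then show ?thesis by simp
    qed
    finally show ?thesis unfolding bnd_def using True uv(6) by simp
  qed
  show ?thesis using UK KT K(3) bound by simp
qed

lemma part_i:
  "int (inter_sum VM EM m EH 3) \<le>
       int (card Tri) * int m ^ (n - 2)
       - int (xH m EH E) * int m ^ (n - 3)
       + int (card (Pset VM EM (n - 3) 3)) * int m ^ (n - 3)"
proof -
  let ?P = "Pset VM EM (n - 3) 3"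
  let ?N = "\<lambda>A. int (card (Nset A))"
  have "int (inter_sum VM EM m EH 3) = (\<Sum>A\<in>Ak 3. ?N A)" using inter_N by simp
  also have "\<dots> = (\<Sum>A\<in>Ak 3 - ?P. ?N A) + (\<Sum>A\<in>?P. ?N A)"
    by (rule sum.subset_diff[OF P_sub finAk])
  finally have split: "int (inter_sum VM EM m EH 3) = (\<Sum>A\<in>Ak 3 - ?P. ?N A) + (\<Sum>A\<in>?P. ?N A)" .
  have p1: "(\<Sum>A\<in>?P. ?N A) \<le> int (card ?P) * int m ^ (n - 3)"
  proof -
    have "(\<Sum>A\<in>?P. ?N A) \<le> (\<Sum>A\<in>?P. int m ^ (n - 3))"
    proof (rule sum_mono)
      fix A assume "A \<in> ?P"
      then have A: "A \<subseteq> EM" "card (components VM A) = n - 3" unfolding Pset_def by auto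
      then have "card (Nset A) \<le> m ^ (n - 3)" using upper[OF A(1)] by simp
      then show "?N A \<le> int m ^ (n - 3)" by (metis of_nat_le_iff of_nat_power)
    qed
    then show ?thesis by simp
  qed
  have inj: "inj_on Union (Ak 3 - ?P)"
    by (rule inj_onI) (metis nonP3)
  have img: "Union ` (Ak 3 - ?P) \<subseteq> Tri" using nonP3 by auto
  have "(\<Sum>A\<in>Ak 3 - ?P. ?N A) \<le> (\<Sum>A\<in>Ak 3 - ?P. bnd (\<Union>A))"
    by (rule sum_mono) (use nonP3 in auto)
  also have "\<dots> = (\<Sum>T\<in>Union ` (Ak 3 - ?P). bnd T)" using sum.reindex[OF inj, of bnd] by (simp add: comp_def)
  also have "\<dots> \<le> (\<Sum>T\<in>Tri. bnd T)"
    by (rule sum_mono2[OF finTri img]) (use bnd_nonneg in auto)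
  also have "\<dots> = int (card Tri) * int (m ^ (n - 2))
      - (\<Sum>T\<in>Tri. if w \<in> T then int (x_edge m EH (T - {w})) * int (m ^ (n - 3)) else 0)"
    unfolding bnd_def by (simp add: sum_subtractf)
  also have "(\<Sum>T\<in>Tri. if w \<in> T then int (x_edge m EH (T - {w})) * int (m ^ (n - 3)) else 0)
      = (\<Sum>T\<in>{T\<in>Tri. w \<in> T}. int (x_edge m EH (T - {w})) * int (m ^ (n - 3)))"
    by (rule sum.inter_filter[OF finTri, symmetric])
  also have "\<dots> = (\<Sum>T\<in>insert w ` E. int (x_edge m EH (T - {w})) * int (m ^ (n - 3)))"
  proof -
    have tweq: "{T\<in>Tri. w \<in> T} = insert w ` E" using triw_eq by auto
    show ?thesis by (simp only: tweq)
  qed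
  also have "\<dots> = (\<Sum>e\<in>E. int (x_edge m EH (insert w e - {w})) * int (m ^ (n - 3)))"
  proof -
    have "inj_on (insert w) E"
    proof (rule inj_onI)
      fix e1 e2 assume "e1 \<in> E" "e2 \<in> E" "insert w e1 = insert w e2"
      moreover have "w \<notin> e1" "w \<notin> e2" using Ein \<open>e1 \<in> E\<close> \<open>e2 \<in> E\<close> wV by blast+
      ultimately show "e1 = e2" by (metis insert_ident)
    qed
    then show ?thesis using sum.reindex[of "insert w" E "\<lambda>T. int (x_edge m EH (T - {w})) * int (m ^ (n - 3))"] by (simp add: comp_def)
  qed
  also have "\<dots> = (\<Sum>e\<in>E. int (x_edge m EH e)) * int (m ^ (n - 3))"
  proof -
    have "\<And>e. e \<in> E \<Longrightarrow> insert w e - {w} = e" using Ein wV by blast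
    then show ?thesis by (simp add: sum_distrib_right)
  qed
  also have "(\<Sum>e\<in>E. int (x_edge m EH e)) = int (xH m EH E)" unfolding xH_def by simp
  finally have p2: "(\<Sum>A\<in>Ak 3 - ?P. ?N A) \<le> int (card Tri) * int (m ^ (n - 2)) - int (xH m EH E) * int (m ^ (n - 3))" .
  show ?thesis using split p1 p2 by simp
qed

end

theorem lemma12:
  fixes V :: "'v set" and E :: "'v set set" and w :: 'v
    and n s m :: nat and EH :: "('v \<times> nat) set set"
  assumes G: "sgraph V E"
    and nV: "card V = n - 1" and n4: "n \<ge> 4"
    and sE: "card E = s" and s3: "s \<ge> 3"
    and w: "w \<notin> V"
    and cover: "is_named_cover (joinV V w) (joinE V E w) m EH"
    and full: "\<And>u v. {u, v} \<in> joinE V E w \<Longrightarrow>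
                 card (edges_between EH (fib m u) (fib m v)) = m"
    and normal: "\<And>v j. v \<in> V \<Longrightarrow> j \<in> {1..m} \<Longrightarrow> {(w, j), (v, j)} \<in> EH"
  shows
    "int (inter_sum (joinV V w) (joinE V E w) m EH 3) \<le>
       int (num_triangles (joinV V w) (joinE V E w)) * int m ^ (n - 2)
       - int (xH m EH E) * int m ^ (n - 3)
       + int (card (Pset (joinV V w) (joinE V E w) (n - 3) 3)) * int m ^ (n - 3)
     \<and> int (inter_sum (joinV V w) (joinE V E w) m EH 4) \<ge>
       int (card (Pset (joinV V w) (joinE V E w) (n - 3) 4)) * int m ^ (n - 3)
       - 2 * int (card (Pset (joinV V w) (joinE V E w) (n - 3) 4)) * int (xH m EH E) * int m ^ (n - 4)
     \<and> int (inter_sum (joinV V w) (joinE V E w) m EH 5) \<le>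
       int (card (Pset (joinV V w) (joinE V E w) (n - 3) 5)) * int m ^ (n - 3)
       + (int ((s + n - 1) choose 5) - int (card (Pset (joinV V w) (joinE V E w) (n - 3) 5)))
           * int m ^ (n - 4)
     \<and> int (inter_sum (joinV V w) (joinE V E w) m EH 6) \<ge>
       int (card (Pset (joinV V w) (joinE V E w) (n - 3) 6)) * int m ^ (n - 3)
       - 2 * int (card (Pset (joinV V w) (joinE V E w) (n - 3) 6)) * int (xH m EH E) * int m ^ (n - 4)
     \<and> (\<forall>k\<ge>7. int (inter_sum (joinV V w) (joinE V E w) m EH k) \<le>
            int ((s + n - 1) choose k) * int m ^ (n - 4))"
proof -
  have finV: "finite V" using G unfolding sgraph_def by simp
  have Ein: "\<And>e. e \<in> E \<Longrightarrow> \<exists>a b. e = {a,b} \<and> a \<noteq> b \<and> a \<in> V \<and> b \<in> V"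
    using G unfolding sgraph_def by blast
  have cov_sg: "sgraph (joinV V w \<times> {1..m}) EH" using cover unfolding is_named_cover_def by simp
  have cov_m: "\<And>u v. {u, v} \<in> joinE V E w \<Longrightarrow> is_matching (edges_between EH (fib m u) (fib m v))"
    using cover unfolding is_named_cover_def by blast
  have cardVM: "card (joinV V w) = n" using finV w nV n4 unfolding joinV_def by simp
  interpret C: cov3 "joinV V w" "joinE V E w" m EH V E w n
  proof (unfold_locales)
    show "finite (joinV V w)" using finV unfolding joinV_def by simp
  next
    fix e assume "e \<in> joinE V E w"
    then consider "e \<in> E" | v where "v \<in> V" "e = {w,v}" unfolding joinE_def by blast
    then show "\<exists>a b. e = {a,b} \<and> a \<noteq> b \<and> a \<in> joinV V w \<and> b \<in> joinV V w"
    proof cases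
      case 1 then show ?thesis using Ein unfolding joinV_def by blast
    next
      case 2 then show ?thesis using w unfolding joinV_def by blast
    qed
  next
    fix f assume "f \<in> EH"
    then show "\<exists>p q. f = {p,q} \<and> p \<noteq> q \<and> p \<in> joinV V w \<times> {1..m} \<and> q \<in> joinV V w \<times> {1..m}"
      using cov_sg unfolding sgraph_def by blast
  next
    fix u v assume "{u,v} \<in> joinE V E w"
    then show "is_matching (edges_between EH (fib m u) (fib m v))" using cov_m by blast
  next
    fix u v assume "{u,v} \<in> joinE V E w"
    then show "card (edges_between EH (fib m u) (fib m v)) = m" using full by blast
  next
    show "joinV V w = insert w V" unfolding joinV_def ..
  qed (use w Ein normal cardVM n4 in auto)
  have cardEM: "card (joinE V E w) = s + n - 1"
  proof -
    define W where "W = {{w, v} | v. v \<in> V}"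
    have WV: "W = (\<lambda>v. {w,v}) ` V" unfolding W_def by auto
    have inj: "inj_on (\<lambda>v. {w,v}) V"
      by (rule inj_onI) (use w in \<open>auto simp: doubleton_eq_iff\<close>)
    have cW: "card W = n - 1" using card_image[OF inj] WV nV by simp
    have finE: "finite E" using C.finE .
    have disj: "E \<inter> W = {}"
    proof (rule ccontr)
      assume "E \<inter> W \<noteq> {}"
      then obtain e where "e \<in> E" "e \<in> W" by auto
      then have e: "e \<in> E" "e \<in> W" by auto
      from e(2) have "w \<in> e" unfolding W_def by auto
      moreover obtain a b where "e = {a,b}" "a \<in> V" "b \<in> V" using Ein[OF e(1)] by blast
      ultimately show False using w by auto
    qed
    have "card (joinE V E w) = card E + card W"
      unfolding joinE_def W_def[symmetric] by (rule card_Un_disjoint[OF finE _ disj]) (simp add: WV finV)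
    then show ?thesis using cW sE n4 by simp
  qed
  have tri: "num_triangles (joinV V w) (joinE V E w) = card C.Tri"
    unfolding num_triangles_def C.Tri_def ..
  have i: "int (inter_sum (joinV V w) (joinE V E w) m EH 3) \<le>
       int (num_triangles (joinV V w) (joinE V E w)) * int m ^ (n - 2)
       - int (xH m EH E) * int m ^ (n - 3)
       + int (card (Pset (joinV V w) (joinE V E w) (n - 3) 3)) * int m ^ (n - 3)"
    using C.part_i tri by simp
  have ii: "int (inter_sum (joinV V w) (joinE V E w) m EH 4) \<ge>
       int (card (Pset (joinV V w) (joinE V E w) (n - 3) 4)) * int m ^ (n - 3)
       - 2 * int (card (Pset (joinV V w) (joinE V E w) (n - 3) 4)) * int (xH m EH E) * int m ^ (n - 4)"
    using C.part_even[of 4] by simp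
  have iv: "int (inter_sum (joinV V w) (joinE V E w) m EH 6) \<ge>
       int (card (Pset (joinV V w) (joinE V E w) (n - 3) 6)) * int m ^ (n - 3)
       - 2 * int (card (Pset (joinV V w) (joinE V E w) (n - 3) 6)) * int (xH m EH E) * int m ^ (n - 4)"
    using C.part_even[of 6] by simp
  have iii: "int (inter_sum (joinV V w) (joinE V E w) m EH 5) \<le>
       int (card (Pset (joinV V w) (joinE V E w) (n - 3) 5)) * int m ^ (n - 3)
       + (int ((s + n - 1) choose 5) - int (card (Pset (joinV V w) (joinE V E w) (n - 3) 5)))
           * int m ^ (n - 4)"
  proof -
    let ?P = "card (Pset (joinV V w) (joinE V E w) (n - 3) 5)"
    have Ple: "?P \<le> (s + n - 1) choose 5"
      using card_mono[OF C.finAk C.P_sub] C.cardAk cardEM by metis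
    have "inter_sum (joinV V w) (joinE V E w) m EH 5 \<le> ?P * m ^ (n - 3) + (((s + n - 1) choose 5) - ?P) * m ^ (n - 4)"
      using C.part_iii cardEM by simp
    then have "int (inter_sum (joinV V w) (joinE V E w) m EH 5) \<le> int (?P * m ^ (n - 3) + (((s + n - 1) choose 5) - ?P) * m ^ (n - 4))"
      by linarith
    also have "\<dots> = int ?P * int m ^ (n - 3) + (int ((s + n - 1) choose 5) - int ?P) * int m ^ (n - 4)"
      using Ple by (simp add: of_nat_diff)
    finally show ?thesis .
  qed
  have v: "\<forall>k\<ge>7. int (inter_sum (joinV V w) (joinE V E w) m EH k) \<le>
            int ((s + n - 1) choose k) * int m ^ (n - 4)"
  proof (intro allI impI)
    fix k :: nat assume "k \<ge> 7"
    then have "inter_sum (joinV V w) (joinE V E w) m EH k \<le> ((s + n - 1) choose k) * m ^ (n - 4)"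
      using C.part_v cardEM by simp
    then show "int (inter_sum (joinV V w) (joinE V E w) m EH k) \<le> int ((s + n - 1) choose k) * int m ^ (n - 4)"
      by (metis of_nat_le_iff of_nat_mult of_nat_power)
  qed
  show ?thesis using i ii iii iv v by blast
qed

end
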